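(* For each integer $A\ge2$ the series $u(z)=\operatorname{Re}\sum_{k=0}^\infty A^kz^{2^{A^k}}$ converges in $\mathbf D$ and there is a constant $C$ with $|u(z)|\le C\log\frac{e}{1-|z|}$ for all $z\in\mathbf D$.
   Context: $\mathbf D$ is the open unit disc. *)

theory Defs
  imports "HOL-Analysis.Analysis"
begin

end

theory Submission
  imports Defs
begin

lemma blockS:
  fixes r :: real
  assumes r0: "0 \<le> r" and r1: "r < 1" and a1: "1 \<le> a"
  shows "r ^ (a + d) * (ln (real (a + d)) - ln (real a))
           \<le> (\<Sum>n<a+d. r ^ n / real n) - (\<Sum>n<a. r ^ n / real n)"
proof (induction d)
  case 0
  then show ?case by simp
next
  case (Suc d)
  let ?b = "a + d"
  have b1: "real ?b \<ge> 1" using a1 by simp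
  have lnpos: "ln (real ?b) - ln (real a) \<ge> 0" using a1 by simp
  have rr: "r ^ Suc ?b \<le> r ^ ?b" by (rule power_decreasing) (use r0 r1 in auto)
  have h1: "r ^ Suc ?b * (ln (real ?b) - ln (real a)) \<le> r ^ ?b * (ln (real ?b) - ln (real a))"
    using rr lnpos by (simp add: mult_right_mono)
  have e: "1 + 1 / real ?b = real (Suc ?b) / real ?b" using b1 by (simp add: field_simps)
  have "ln (real (Suc ?b)) - ln (real ?b) = ln (1 + 1 / real ?b)"
    unfolding e using b1 by (subst ln_div) auto
  also have "\<dots> \<le> 1 / real ?b" by (rule ln_add_one_self_le_self) simp
  finally have lnd: "ln (real (Suc ?b)) - ln (real ?b) \<le> 1 / real ?b" .
  have h2: "r ^ Suc ?b * (ln (real (Suc ?b)) - ln (real ?b)) \<le> r ^ ?b / real ?b"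
  proof -
    have "r ^ Suc ?b * (ln (real (Suc ?b)) - ln (real ?b)) \<le> r ^ Suc ?b * (1 / real ?b)"
      by (rule mult_left_mono[OF lnd]) (use r0 in simp)
    also have "\<dots> \<le> r ^ ?b * (1 / real ?b)" by (rule mult_right_mono[OF rr]) (use b1 in simp)
    finally show ?thesis by simp
  qed
  have "r ^ (a + Suc d) * (ln (real (a + Suc d)) - ln (real a))
      = r ^ Suc ?b * (ln (real ?b) - ln (real a)) + r ^ Suc ?b * (ln (real (Suc ?b)) - ln (real ?b))"
    by (simp add: algebra_simps)
  also have "\<dots> \<le> r ^ ?b * (ln (real ?b) - ln (real a)) + r ^ ?b / real ?b"
    using h1 h2 by linarith
  also have "\<dots> \<le> (\<Sum>n<?b. r ^ n / real n) - (\<Sum>n<a. r ^ n / real n) + r ^ ?b / real ?b"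
    using Suc.IH by linarith
  also have "\<dots> = (\<Sum>n<a + Suc d. r ^ n / real n) - (\<Sum>n<a. r ^ n / real n)"
    by simp
  finally show ?case .
qed

lemma blockS':
  fixes r :: real
  assumes r0: "0 \<le> r" and r1: "r < 1" and a1: "1 \<le> a" and ab: "a \<le> b"
  shows "r ^ b * (ln (real b) - ln (real a))
           \<le> (\<Sum>n<b. r ^ n / real n) - (\<Sum>n<a. r ^ n / real n)"
  using blockS[OF r0 r1 a1, of "b - a"] ab by simp

lemma term_step:
  fixes r :: real
  assumes r0: "0 \<le> r" and r1: "r < 1" and A: "A \<ge> (2::nat)"
  shows "real (A ^ Suc K) * r ^ (2 ^ (A ^ Suc K))
     \<le> (2 / ln 2) * ((\<Sum>n<2 ^ (A ^ Suc K). r ^ n / real n) - (\<Sum>n<2 ^ (A ^ K). r ^ n / real n))"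
proof -
  define p where "p = A ^ K"
  define b :: nat where "b = 2 ^ (A ^ Suc K)"
  have pA: "A ^ Suc K = A * p" by (simp add: p_def)
  have p1: "p \<le> A * p" using A by simp
  have ab: "(2::nat) ^ p \<le> b" unfolding b_def pA by (rule power_increasing) (use p1 in auto)
  have a1: "(1::nat) \<le> 2 ^ p" by simp
  have key: "r ^ b * (ln (real b) - ln (real (2 ^ p))) \<le> (\<Sum>n<b. r ^ n / real n) - (\<Sum>n<2 ^ p. r ^ n / real n)"
    by (rule blockS'[OF r0 r1 a1 ab])
  have lnb: "ln (real b) - ln (real ((2::nat) ^ p)) = (real (A*p) - real p) * ln 2"
    unfolding b_def pA by (simp add: ln_realpow algebra_simps)
  have ineq: "real (A * p) \<le> 2 * (real (A*p) - real p)"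
  proof -
    have "2 * real p \<le> real A * real p" using A by (intro mult_right_mono) auto
    then show ?thesis by simp
  qed
  have rb: "0 \<le> r ^ b" using r0 by simp
  have "real (A * p) * r ^ b \<le> 2 * (real (A*p) - real p) * r ^ b"
    using ineq rb by (rule mult_right_mono)
  also have "\<dots> = (2 / ln 2) * (r ^ b * (ln (real b) - ln (real ((2::nat) ^ p))))"
    by (subst lnb) (simp add: field_simps)
  also have "\<dots> \<le> (2 / ln 2) * ((\<Sum>n<b. r ^ n / real n) - (\<Sum>n<2 ^ p. r ^ n / real n))"
    using key by (intro mult_left_mono) auto
  finally show ?thesis unfolding b_def p_def pA by simp
qed

lemma partial_bound:
  fixes r :: real
  assumes r0: "0 \<le> r" and r1: "r < 1" and A: "A \<ge> (2::nat)"
  shows "(\<Sum>k<Suc K. real (A ^ k) * r ^ (2 ^ (A ^ k)))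
     \<le> 1 + (2 / ln 2) * ((\<Sum>n<2 ^ (A ^ K). r ^ n / real n) - (\<Sum>n<2. r ^ n / real n))"
proof (induction K)
  case 0
  have "r ^ 2 \<le> 1" using r0 r1 by (simp add: power_le_one)
  then show ?case by simp
next
  case (Suc K)
  show ?case using Suc.IH term_step[OF r0 r1 A, of K] by (simp add: algebra_simps)
qed

lemma S_le:
  fixes r :: real
  assumes r0: "0 \<le> r" and r1: "r < 1"
  shows "(\<Sum>n<N. r ^ n / real n) \<le> - ln (1 - r)"
proof -
  have "(\<lambda>n. - ((-(-r))^n) / of_nat n) sums ln (1 + (-r))"
    by (rule ln_series') (use r0 r1 in auto)
  then have "(\<lambda>n. r ^ n / real n) sums (- ln (1 - r))"
    using sums_minus by fastforce
  then show ?thesis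
    using sum_le_suminf[of "\<lambda>n. r ^ n / real n" "{..<N}"] r0 by (auto simp: sums_iff)
qed

theorem lemma9:
  fixes A :: nat
  assumes "A \<ge> 2"
  shows "(\<forall>z \<in> ball (0::complex) 1.
            summable (\<lambda>k. of_nat (A ^ k) * z ^ (2 ^ (A ^ k))))
       \<and> (\<exists>C::real. \<forall>z \<in> ball (0::complex) 1.
            \<bar>Re (\<Sum>k. of_nat (A ^ k) * z ^ (2 ^ (A ^ k)))\<bar>
              \<le> C * ln (exp 1 / (1 - norm z)))"
proof -
  define c :: real where "c = 2 / ln 2"
  have c0: "c \<ge> 0" unfolding c_def by simp
  have main: "summable (\<lambda>k. norm (of_nat (A ^ k) * z ^ (2 ^ (A ^ k)))) \<and>
     (\<Sum>k. norm (of_nat (A ^ k) * z ^ (2 ^ (A ^ k)) :: complex)) \<le> 1 + c * (- ln (1 - norm z))"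
    if z: "z \<in> ball (0::complex) 1" for z
  proof -
    define r where "r = norm z"
    have r0: "0 \<le> r" and r1: "r < 1" using z by (auto simp: r_def)
    have nf: "norm (of_nat (A ^ k) * z ^ (2 ^ (A ^ k)) :: complex) = real (A ^ k) * r ^ (2 ^ (A ^ k))" for k
      by (simp add: r_def norm_mult norm_power)
    have S2: "0 \<le> (\<Sum>n<2. r ^ n / real n)" using r0 by (intro sum_nonneg) auto
    have bnd: "(\<Sum>k<K. real (A ^ k) * r ^ (2 ^ (A ^ k))) \<le> 1 + c * (- ln (1 - r))" for K
    proof -
      have "(\<Sum>k<K. real (A ^ k) * r ^ (2 ^ (A ^ k))) \<le> (\<Sum>k<Suc K. real (A ^ k) * r ^ (2 ^ (A ^ k)))"
        using r0 by (simp add: sum.lessThan_Suc)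
      also have "\<dots> \<le> 1 + c * ((\<Sum>n<2 ^ (A ^ K). r ^ n / real n) - (\<Sum>n<2. r ^ n / real n))"
        using partial_bound[OF r0 r1 assms] by (simp add: c_def)
      also have "\<dots> \<le> 1 + c * (- ln (1 - r))"
        using S_le[OF r0 r1, of "2 ^ (A ^ K)"] S2 c0 by (intro add_left_mono mult_left_mono) auto
      finally show ?thesis .
    qed
    have sm: "summable (\<lambda>k. real (A ^ k) * r ^ (2 ^ (A ^ k)))"
      by (rule summableI_nonneg_bounded[OF _ bnd]) (use r0 in auto)
    have "(\<Sum>k. real (A ^ k) * r ^ (2 ^ (A ^ k))) \<le> 1 + c * (- ln (1 - r))"
      by (rule suminf_le_const[OF sm bnd])
    then show ?thesis using sm unfolding nf r_def by simp
  qed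
  have part1: "\<forall>z \<in> ball (0::complex) 1. summable (\<lambda>k. of_nat (A ^ k) * z ^ (2 ^ (A ^ k)))"
  proof
    fix z :: complex assume z: "z \<in> ball 0 1"
    show "summable (\<lambda>k. of_nat (A ^ k) * z ^ (2 ^ (A ^ k)))"
      by (rule summable_norm_cancel) (use main[OF z] in blast)
  qed
  have "\<forall>z \<in> ball (0::complex) 1.
            \<bar>Re (\<Sum>k. of_nat (A ^ k) * z ^ (2 ^ (A ^ k)))\<bar>
              \<le> (1 + c) * ln (exp 1 / (1 - norm z))"
  proof
    fix z :: complex assume z: "z \<in> ball 0 1"
    have n1: "norm z < 1" using z by simp
    define t where "t = - ln (1 - norm z)"
    have t0: "t \<ge> 0" unfolding t_def using n1 by simp
    have lnE: "ln (exp 1 / (1 - norm z)) = 1 + t"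
    proof -
      have "ln (exp 1 / (1 - norm z)) = ln (exp 1) - ln (1 - norm z)"
        by (rule ln_divide_pos) (use n1 in auto)
      then show ?thesis unfolding t_def by simp
    qed
    have "\<bar>Re (\<Sum>k. of_nat (A ^ k) * z ^ (2 ^ (A ^ k)))\<bar> \<le> norm (\<Sum>k. of_nat (A ^ k) * z ^ (2 ^ (A ^ k)))"
      by (rule abs_Re_le_cmod)
    also have "\<dots> \<le> (\<Sum>k. norm (of_nat (A ^ k) * z ^ (2 ^ (A ^ k)) :: complex))"
      using main[OF z] by (intro summable_norm) auto
    also have "\<dots> \<le> 1 + c * t" unfolding t_def by (rule conjunct2[OF main[OF z]])
    also have "\<dots> \<le> (1 + c) * (1 + t)" using t0 c0 mult_nonneg_nonneg[OF c0 t0] by (simp add: algebra_simps)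
    finally show "\<bar>Re (\<Sum>k. of_nat (A ^ k) * z ^ (2 ^ (A ^ k)))\<bar> \<le> (1 + c) * ln (exp 1 / (1 - norm z))"
      by (simp add: lnE)
  qed
  with part1 show ?thesis by blast
qed

end
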